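(* Let $\Lambda$ be a left cancellative small category and $v\in\Lambda^0$. Then (a) every maximal filter in $\mathcal D^{(0)}_v$ belongs to $v\Lambda^*$; (b) every totally ordered (by inclusion) subset of $v\Lambda^*$ has an upper bound in $v\Lambda^*$ (so Zorn's lemma applies to $v\Lambda^*$); and (c) every maximal element of $v\Lambda^*$ (with respect to inclusion) is a maximal filter in $\mathcal D^{(0)}_v$.
   Context: A left cancellative small category (LCSC) is a small category $\Lambda$ such that $\alpha\beta=\alpha\gamma$ implies $\beta=\gamma$. Composition $\alpha\beta$ is defined when $s(\alpha)=r(\beta)$; $\Lambda^0$ is the set of objects; $v\Lambda=\{\alpha:r(\alpha)=v\}$. For $\alpha\in\Lambda$, $\tau^\alpha(\beta)=\alpha\beta$ on $s(\alpha)\Lambda$ and $\sigma^\alpha:\alpha\Lambda\to s(\alpha)\Lambda$ is its inverse. A zigzag is a tuple $\zeta=(\alpha_1,\beta_1,\dots,\alpha_n,\beta_n)$ with $r(\alpha_i)=r(\beta_i)$ and $s(\alpha_{i+1})=s(\beta_i)$, $s(\zeta)=s(\beta_n)$; the zigzag map $\varphi_\zeta=\sigma^{\alpha_1}\circ\tau^{\beta_1}\circ\cdots\circ\sigma^{\alpha_n}\circ\tau^{\beta_n}$ (partial map) has domain $A(\zeta)\subseteq s(\zeta)\Lambda$. $\mathcal D^{(0)}_v$ is the set of nonempty $A(\zeta)$ with $s(\zeta)=v$ (closed under nonempty intersection). A filter in $\mathcal D^{(0)}_v$ is a nonempty $C\subseteq\mathcal D^{(0)}_v$ closed under intersection and under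 supersets within $\mathcal D^{(0)}_v$ (so its members are nonempty). A finite $\mathcal F\subseteq\mathcal D^{(0)}_v$ covers the filter $C$ if some $E\in C$ satisfies $E\subseteq\bigcup\mathcal F$. $v\Lambda^*$ is the set of filters $C$ in $\mathcal D^{(0)}_v$ such that every finite $\mathcal F\subseteq\mathcal D^{(0)}_v$ with $\mathcal F\cap C=\varnothing$ does not cover $C$. *)

theory Defs
  imports Main
begin

text \<open>A small category: objects Obj (type 'o), morphisms Mor (type 'a),
 source s, range r, identities idm, composition cmp (cmp a b = a b, defined when s a = r b).\<close>

definition lcsc :: "'o set \<Rightarrow> 'a set \<Rightarrow> ('a \<Rightarrow> 'o) \<Rightarrow> ('a \<Rightarrow> 'o)
   \<Rightarrow> ('o \<Rightarrow> 'a) \<Rightarrow> ('a \<Rightarrow> 'a \<Rightarrow> 'a) \<Rightarrow> bool" where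
  "lcsc Obj Mor s r idm cmp \<longleftrightarrow>
     (\<forall>a\<in>Mor. s a \<in> Obj \<and> r a \<in> Obj) \<and>
     (\<forall>v\<in>Obj. idm v \<in> Mor \<and> s (idm v) = v \<and> r (idm v) = v) \<and>
     (\<forall>a\<in>Mor. \<forall>b\<in>Mor. s a = r b \<longrightarrow>
          cmp a b \<in> Mor \<and> r (cmp a b) = r a \<and> s (cmp a b) = s b) \<and>
     (\<forall>a\<in>Mor. \<forall>b\<in>Mor. \<forall>c\<in>Mor. s a = r b \<longrightarrow> s b = r c \<longrightarrow>
          cmp (cmp a b) c = cmp a (cmp b c)) \<and>
     (\<forall>a\<in>Mor. cmp (idm (r a)) a = a \<and> cmp a (idm (s a)) = a) \<and>
     (\<forall>a\<in>Mor. \<forall>b\<in>Mor. \<forall>c\<in>Mor. s a = r b \<longrightarrow> s a = r c \<longrightarrow>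
          cmp a b = cmp a c \<longrightarrow> b = c)"

definition is_zigzag :: "'a set \<Rightarrow> ('a \<Rightarrow> 'o) \<Rightarrow> ('a \<Rightarrow> 'o) \<Rightarrow> ('a \<times> 'a) list \<Rightarrow> bool" where
  "is_zigzag Mor s r zs \<longleftrightarrow> zs \<noteq> [] \<and>
     (\<forall>p\<in>set zs. fst p \<in> Mor \<and> snd p \<in> Mor \<and> r (fst p) = r (snd p)) \<and>
     (\<forall>i. Suc i < length zs \<longrightarrow> s (fst (zs ! Suc i)) = s (snd (zs ! i)))"

definition zz_src :: "('a \<Rightarrow> 'o) \<Rightarrow> ('a \<times> 'a) list \<Rightarrow> 'o" where
  "zz_src s zs = s (snd (last zs))"

definition tau_map :: "'a set \<Rightarrow> ('a \<Rightarrow> 'o) \<Rightarrow> ('a \<Rightarrow> 'o) \<Rightarrow> ('a \<Rightarrow> 'a \<Rightarrow> 'a)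
   \<Rightarrow> 'a \<Rightarrow> 'a \<Rightarrow> 'a option" where
  "tau_map Mor s r cmp b g = (if g \<in> Mor \<and> r g = s b then Some (cmp b g) else None)"

definition sigma_map :: "'a set \<Rightarrow> ('a \<Rightarrow> 'o) \<Rightarrow> ('a \<Rightarrow> 'o) \<Rightarrow> ('a \<Rightarrow> 'a \<Rightarrow> 'a)
   \<Rightarrow> 'a \<Rightarrow> 'a \<Rightarrow> 'a option" where
  "sigma_map Mor s r cmp a d =
     (if \<exists>e\<in>Mor. r e = s a \<and> cmp a e = d
      then Some (THE e. e \<in> Mor \<and> r e = s a \<and> cmp a e = d) else None)"

text \<open>phi_zeta = sigma^{a1} o tau^{b1} o ... o sigma^{an} o tau^{bn}, as a partial map.\<close>
fun zz_map :: "'a set \<Rightarrow> ('a \<Rightarrow> 'o) \<Rightarrow> ('a \<Rightarrow> 'o) \<Rightarrow> ('a \<Rightarrow> 'a \<Rightarrow> 'a)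
   \<Rightarrow> ('a \<times> 'a) list \<Rightarrow> 'a \<Rightarrow> 'a option" where
  "zz_map Mor s r cmp [] g = Some g"
| "zz_map Mor s r cmp ((a, b) # zs) g =
     Option.bind (zz_map Mor s r cmp zs g)
       (\<lambda>d. Option.bind (tau_map Mor s r cmp b d) (sigma_map Mor s r cmp a))"

definition zz_dom :: "'a set \<Rightarrow> ('a \<Rightarrow> 'o) \<Rightarrow> ('a \<Rightarrow> 'o) \<Rightarrow> ('a \<Rightarrow> 'a \<Rightarrow> 'a)
   \<Rightarrow> ('a \<times> 'a) list \<Rightarrow> 'a set" where
  "zz_dom Mor s r cmp zs =
     {g \<in> Mor. r g = zz_src s zs \<and> zz_map Mor s r cmp zs g \<noteq> None}"

definition D0 :: "'a set \<Rightarrow> ('a \<Rightarrow> 'o) \<Rightarrow> ('a \<Rightarrow> 'o) \<Rightarrow> ('a \<Rightarrow> 'a \<Rightarrow> 'a) \<Rightarrow> 'o \<Rightarrow> 'a set set" where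
  "D0 Mor s r cmp v =
     {E. \<exists>zs. is_zigzag Mor s r zs \<and> zz_src s zs = v \<and> E = zz_dom Mor s r cmp zs \<and> E \<noteq> {}}"

definition is_filter_in :: "'b set set \<Rightarrow> 'b set set \<Rightarrow> bool" where
  "is_filter_in D C \<longleftrightarrow> C \<noteq> {} \<and> C \<subseteq> D \<and>
     (\<forall>E\<in>C. \<forall>F\<in>C. E \<inter> F \<in> C) \<and>
     (\<forall>E\<in>C. \<forall>F\<in>D. E \<subseteq> F \<longrightarrow> F \<in> C)"

definition is_maximal_filter_in :: "'b set set \<Rightarrow> 'b set set \<Rightarrow> bool" where
  "is_maximal_filter_in D C \<longleftrightarrow> is_filter_in D C \<and>
     (\<forall>C'. is_filter_in D C' \<and> C \<subseteq> C' \<longrightarrow> C' = C)"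

definition covers :: "'b set set \<Rightarrow> 'b set set \<Rightarrow> bool" where
  "covers F C \<longleftrightarrow> (\<exists>E\<in>C. E \<subseteq> \<Union>F)"

definition vLambda_star :: "'a set \<Rightarrow> ('a \<Rightarrow> 'o) \<Rightarrow> ('a \<Rightarrow> 'o) \<Rightarrow> ('a \<Rightarrow> 'a \<Rightarrow> 'a) \<Rightarrow> 'o \<Rightarrow> 'a set set set" where
  "vLambda_star Mor s r cmp v =
     {C. is_filter_in (D0 Mor s r cmp v) C \<and>
         (\<forall>F. finite F \<and> F \<subseteq> D0 Mor s r cmp v \<and> F \<inter> C = {} \<longrightarrow> \<not> covers F C)}"

end

theory Submission imports Defs begin

definition revz :: "('a \<times> 'a) list \<Rightarrow> ('a \<times> 'a) list" where
  "revz zs = rev (map (\<lambda>(a,b). (b,a)) zs)"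

lemma zz_map_append:
  "zz_map Mor s r cmp (xs @ ys) g = Option.bind (zz_map Mor s r cmp ys g) (zz_map Mor s r cmp xs)"
proof (induction xs)
  case Nil then show ?case by simp
next
  case (Cons p xs)
  obtain a b where p: "p = (a,b)" by fastforce
  show ?case using Cons by (simp add: p)
qed

lemma lcsc_cancel: "lcsc Obj Mor s r idm cmp \<Longrightarrow> a \<in> Mor \<Longrightarrow> b \<in> Mor \<Longrightarrow> c \<in> Mor
  \<Longrightarrow> s a = r b \<Longrightarrow> s a = r c \<Longrightarrow> cmp a b = cmp a c \<Longrightarrow> b = c"
  unfolding lcsc_def by blast

lemma sigma_cmp: assumes "lcsc Obj Mor s r idm cmp" "a \<in> Mor" "e \<in> Mor" "r e = s a"
  shows "sigma_map Mor s r cmp a (cmp a e) = Some e"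
proof -
  have "(THE x. x \<in> Mor \<and> r x = s a \<and> cmp a x = cmp a e) = e"
    apply (rule the_equality)
    using assms lcsc_cancel[OF assms(1)] by auto
  then show ?thesis unfolding sigma_map_def using assms by auto
qed

lemma step_inv:
  assumes L: "lcsc Obj Mor s r idm cmp" and ab: "a \<in> Mor" "b \<in> Mor"
    and h: "Option.bind (tau_map Mor s r cmp b d) (sigma_map Mor s r cmp a) = Some h"
  shows "Option.bind (tau_map Mor s r cmp a h) (sigma_map Mor s r cmp b) = Some d"
proof -
  from h have d: "d \<in> Mor" "r d = s b" and sg: "sigma_map Mor s r cmp a (cmp b d) = Some h"
    by (auto simp: tau_map_def split: if_splits)
  from sg obtain e where e: "e \<in> Mor" "r e = s a" "cmp a e = cmp b d"
    unfolding sigma_map_def by (auto split: if_splits)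
  from sigma_cmp[OF L ab(1) e(1,2)] sg e(3) have "h = e" by simp
  with e have "tau_map Mor s r cmp a h = Some (cmp b d)" by (simp add: tau_map_def)
  moreover have "sigma_map Mor s r cmp b (cmp b d) = Some d" using sigma_cmp[OF L ab(2) d] .
  ultimately show ?thesis by simp
qed

lemma zz_inv:
  assumes L: "lcsc Obj Mor s r idm cmp"
  shows "(\<forall>p\<in>set zs. fst p \<in> Mor \<and> snd p \<in> Mor) \<Longrightarrow> zz_map Mor s r cmp zs g = Some h
    \<Longrightarrow> zz_map Mor s r cmp (revz zs) h = Some g"
proof (induction zs arbitrary: h)
  case Nil then show ?case by (simp add: revz_def)
next
  case (Cons p zs)
  obtain a b where p: "p = (a,b)" by fastforce
  from Cons.prems obtain d where d: "zz_map Mor s r cmp zs g = Some d"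
    and h: "Option.bind (tau_map Mor s r cmp b d) (sigma_map Mor s r cmp a) = Some h"
    by (auto simp: p bind_eq_Some_conv)
  have ab: "a \<in> Mor" "b \<in> Mor" using Cons.prems p by auto
  have IH: "zz_map Mor s r cmp (revz zs) d = Some g" using Cons.IH Cons.prems d by auto
  have "revz (p # zs) = revz zs @ [(b,a)]" by (simp add: revz_def p)
  then show ?case using step_inv[OF L ab h] IH by (simp add: zz_map_append)
qed

lemma zigzag_succ: "is_zigzag Mor s r zs \<longleftrightarrow> zs \<noteq> [] \<and>
     (\<forall>p\<in>set zs. fst p \<in> Mor \<and> snd p \<in> Mor \<and> r (fst p) = r (snd p)) \<and>
     successively (\<lambda>p q. s (fst q) = s (snd p)) zs"
  unfolding is_zigzag_def successively_conv_nth by blast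

lemma zigzag_revz: "is_zigzag Mor s r zs \<Longrightarrow> is_zigzag Mor s r (revz zs)"
  unfolding zigzag_succ revz_def by (auto simp: successively_map split_beta eq_commute)

lemma zigzag_append: "is_zigzag Mor s r xs \<Longrightarrow> is_zigzag Mor s r ys \<Longrightarrow>
   s (fst (hd ys)) = s (snd (last xs)) \<Longrightarrow> is_zigzag Mor s r (xs @ ys)"
  unfolding zigzag_succ by (auto simp: successively_append_iff)

lemma revz_hd: "zs \<noteq> [] \<Longrightarrow> fst (hd (revz zs)) = snd (last zs)"
  by (simp add: revz_def hd_rev last_map split_beta)
lemma revz_last: "zs \<noteq> [] \<Longrightarrow> snd (last (revz zs)) = fst (hd zs)"
  by (simp add: revz_def last_rev hd_map split_beta)
lemma revz_ne: "zs \<noteq> [] \<Longrightarrow> revz zs \<noteq> []" by (simp add: revz_def)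

lemma D0_inter:
  assumes L: "lcsc Obj Mor s r idm cmp" and E: "E \<in> D0 Mor s r cmp v" and F: "F \<in> D0 Mor s r cmp v"
    and ne: "E \<inter> F \<noteq> {}"
  shows "E \<inter> F \<in> D0 Mor s r cmp v"
proof -
  from E obtain z where z: "is_zigzag Mor s r z" "zz_src s z = v" "E = zz_dom Mor s r cmp z"
    unfolding D0_def by auto
  from F obtain x where x: "is_zigzag Mor s r x" "zz_src s x = v" "F = zz_dom Mor s r cmp x"
    unfolding D0_def by auto
  define W where "W = revz z @ z @ revz x @ x"
  have zne: "z \<noteq> []" "x \<noteq> []" using z x by (auto simp: is_zigzag_def)
  have zM: "\<forall>p\<in>set z. fst p \<in> Mor \<and> snd p \<in> Mor" using z by (auto simp: is_zigzag_def)
  have xM: "\<forall>p\<in>set x. fst p \<in> Mor \<and> snd p \<in> Mor" using x by (auto simp: is_zigzag_def)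
  have W1: "is_zigzag Mor s r (revz x @ x)"
    by (rule zigzag_append[OF zigzag_revz[OF x(1)] x(1)]) (simp add: revz_last zne)
  have W2: "is_zigzag Mor s r (z @ revz x @ x)"
    apply (rule zigzag_append[OF z(1) W1])
    using z(2) x(2) zne revz_ne[of x] by (simp add: revz_hd zz_src_def)
  have WZ: "is_zigzag Mor s r W" unfolding W_def
    apply (rule zigzag_append[OF zigzag_revz[OF z(1)] W2])
    using zne by (simp add: revz_last)
  have Ws: "zz_src s W = v" using x(2) zne by (simp add: W_def zz_src_def)
  have "zz_dom Mor s r cmp W = E \<inter> F"
  proof (intro equalityI subsetI)
    fix g assume g: "g \<in> zz_dom Mor s r cmp W"
    then have g1: "g \<in> Mor" "r g = v" using Ws by (auto simp: zz_dom_def)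
    from g obtain h where h: "zz_map Mor s r cmp x g = Some h"
      by (auto simp: zz_dom_def W_def zz_map_append bind_eq_None_conv)
    have "zz_map Mor s r cmp (revz x) h = Some g" using zz_inv[OF L xM h] .
    with g h have "zz_map Mor s r cmp z g \<noteq> None"
      by (auto simp: zz_dom_def W_def zz_map_append bind_eq_Some_conv)
    then show "g \<in> E \<inter> F" using g1 h z x by (auto simp: zz_dom_def)
  next
    fix g assume g: "g \<in> E \<inter> F"
    then have g1: "g \<in> Mor" "r g = v" using x by (auto simp: zz_dom_def)
    from g x obtain h where h: "zz_map Mor s r cmp x g = Some h" by (auto simp: zz_dom_def)
    from g z obtain k where k: "zz_map Mor s r cmp z g = Some k" by (auto simp: zz_dom_def)
    show "g \<in> zz_dom Mor s r cmp W"
      using g1 Ws h k zz_inv[OF L xM h] zz_inv[OF L zM k]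
      by (simp add: zz_dom_def W_def zz_map_append)
  qed
  then show ?thesis unfolding D0_def using WZ Ws ne by blast
qed


lemma union_filter:
  assumes "X \<noteq> {}" "\<forall>A\<in>X. is_filter_in D A" "\<forall>A\<in>X. \<forall>B\<in>X. A \<subseteq> B \<or> B \<subseteq> A"
  shows "is_filter_in D (\<Union>X)"
proof -
  have "\<Union>X \<noteq> {}" using assms(1,2) by (auto simp: is_filter_in_def)
  moreover have "\<Union>X \<subseteq> D" using assms(2) by (auto simp: is_filter_in_def)
  moreover have "\<forall>E\<in>\<Union>X. \<forall>F\<in>\<Union>X. E \<inter> F \<in> \<Union>X"
  proof (intro ballI)
    fix E F assume "E \<in> \<Union>X" "F \<in> \<Union>X"
    then obtain A B where AB: "A \<in> X" "B \<in> X" "E \<in> A" "F \<in> B" by blast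
    show "E \<inter> F \<in> \<Union>X"
    proof (cases "A \<subseteq> B")
      case True then show ?thesis using AB assms(2) unfolding is_filter_in_def by blast
    next
      case False then have "B \<subseteq> A" using assms(3) AB by blast
      then show ?thesis using AB assms(2) unfolding is_filter_in_def by blast
    qed
  qed
  moreover have "\<forall>E\<in>\<Union>X. \<forall>F\<in>D. E \<subseteq> F \<longrightarrow> F \<in> \<Union>X"
    using assms(2) unfolding is_filter_in_def by blast
  ultimately show ?thesis unfolding is_filter_in_def by (intro conjI)
qed

lemma filter_max:
  assumes "is_filter_in D C0"
  shows "\<exists>M. is_maximal_filter_in D M \<and> C0 \<subseteq> M"
proof -
  let ?A = "{C. is_filter_in D C \<and> C0 \<subseteq> C}"
  have "\<forall>c\<in>chains ?A. \<exists>U\<in>?A. \<forall>X\<in>c. X \<subseteq> U"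
  proof
    fix c assume c: "c \<in> chains ?A"
    show "\<exists>U\<in>?A. \<forall>X\<in>c. X \<subseteq> U"
    proof (cases "c = {}")
      case True then show ?thesis using assms by auto
    next
      case False
      have "is_filter_in D (\<Union>c)"
        apply (rule union_filter[OF False])
        using chainsD2[OF c] chainsD[OF c] by auto
      moreover have "C0 \<subseteq> \<Union>c" using False chainsD2[OF c] by auto
      ultimately show ?thesis by blast
    qed
  qed
  from Zorn_Lemma2[OF this] obtain M where M: "M \<in> ?A" "\<forall>X\<in>?A. M \<subseteq> X \<longrightarrow> X = M" by blast
  then have "is_maximal_filter_in D M" unfolding is_maximal_filter_in_def by auto
  with M show ?thesis by auto
qed

lemma filt_int: "is_filter_in D C \<Longrightarrow> E \<in> C \<Longrightarrow> F \<in> C \<Longrightarrow> E \<inter> F \<in> C"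
  by (simp add: is_filter_in_def)
lemma filt_up: "is_filter_in D C \<Longrightarrow> E \<in> C \<Longrightarrow> F \<in> D \<Longrightarrow> E \<subseteq> F \<Longrightarrow> F \<in> C"
  by (simp add: is_filter_in_def)
lemma filt_sub: "is_filter_in D C \<Longrightarrow> E \<in> C \<Longrightarrow> E \<in> D"
  by (auto simp add: is_filter_in_def)
lemma filt_ne: "is_filter_in D C \<Longrightarrow> \<exists>E. E \<in> C"
  by (auto simp add: is_filter_in_def)

lemma part_a:
  assumes ne: "\<forall>E\<in>D. E \<noteq> {}" and cl: "\<forall>E\<in>D. \<forall>F\<in>D. E \<inter> F \<noteq> {} \<longrightarrow> E \<inter> F \<in> D"
    and mf: "is_maximal_filter_in D C"
  shows "\<forall>F. finite F \<and> F \<subseteq> D \<and> F \<inter> C = {} \<longrightarrow> \<not> covers F C"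
proof (intro allI impI)
  fix F assume FF: "finite F \<and> F \<subseteq> D \<and> F \<inter> C = {}"
  have filt: "is_filter_in D C" using mf by (simp add: is_maximal_filter_in_def)
  have step1: "\<exists>E'\<in>C. E' \<inter> G = {}" if G: "G \<in> F" for G
  proof (rule ccontr)
    assume "\<not> ?thesis"
    then have meet: "\<forall>E'\<in>C. E' \<inter> G \<noteq> {}" by blast
    have GD: "G \<in> D" "G \<notin> C" using G FF by auto
    define C' where "C' = {H\<in>D. \<exists>E'\<in>C. E' \<inter> G \<subseteq> H}"
    have "is_filter_in D C'"
      unfolding is_filter_in_def
    proof (intro conjI ballI impI)
      show "C' \<noteq> {}" using GD filt_ne[OF filt] unfolding C'_def by blast
      show "C' \<subseteq> D" unfolding C'_def by blast
    next
      fix H1 H2 assume "H1 \<in> C'" "H2 \<in> C'"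
      then obtain E1 E2 where E: "E1 \<in> C" "E2 \<in> C" "E1 \<inter> G \<subseteq> H1" "E2 \<inter> G \<subseteq> H2" "H1 \<in> D" "H2 \<in> D"
        unfolding C'_def by blast
      have E12: "E1 \<inter> E2 \<in> C" using E filt_int[OF filt] by blast
      have "(E1 \<inter> E2) \<inter> G \<noteq> {}" using meet E12 by blast
      then have "H1 \<inter> H2 \<noteq> {}" using E by blast
      then have "H1 \<inter> H2 \<in> D" using cl E by blast
      moreover have "(E1 \<inter> E2) \<inter> G \<subseteq> H1 \<inter> H2" using E by blast
      ultimately show "H1 \<inter> H2 \<in> C'" using E12 unfolding C'_def by blast
    next
      fix H1 H2 assume "H1 \<in> C'" "H2 \<in> D" "H1 \<subseteq> H2"
      then show "H2 \<in> C'" unfolding C'_def by blast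
    qed
    moreover have "C \<subseteq> C'" unfolding C'_def using filt_sub[OF filt] by blast
    moreover have "\<forall>C''. is_filter_in D C'' \<and> C \<subseteq> C'' \<longrightarrow> C'' = C"
      using mf by (simp add: is_maximal_filter_in_def)
    ultimately have "C' = C" by simp
    moreover have "G \<in> C'" using GD filt_ne[OF filt] unfolding C'_def by blast
    ultimately show False using GD by blast
  qed
  have "finite F \<Longrightarrow> F' \<subseteq> F \<Longrightarrow> \<exists>E0\<in>C. \<forall>G\<in>F'. E0 \<inter> G = {}" for F'
  proof (induction F' rule: infinite_finite_induct)
    case (infinite A) then show ?case using finite_subset[of A F] by simp
  next
    case empty then show ?case using filt_ne[OF filt] by auto
  next
    case (insert x A)
    then obtain E0 where E0: "E0 \<in> C" "\<forall>G\<in>A. E0 \<inter> G = {}" by auto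
    have xF: "x \<in> F" using insert.prems by simp
    obtain E1 where E1: "E1 \<in> C" "E1 \<inter> x = {}" using step1[OF xF] by blast
    have I: "E0 \<inter> E1 \<in> C" using filt_int[OF filt E0(1) E1(1)] .
    have "\<forall>G\<in>insert x A. (E0 \<inter> E1) \<inter> G = {}" using E0(2) E1(2) by auto
    then show ?case using I by (intro bexI)
  qed
  from this[of F] FF have ex: "\<exists>E0\<in>C. \<forall>G\<in>F. E0 \<inter> G = {}" by simp
  then obtain E0 where E0: "E0 \<in> C" "\<forall>G\<in>F. E0 \<inter> G = {}" by (elim bexE)
  show "\<not> covers F C"
  proof
    assume "covers F C"
    then obtain E where E: "E \<in> C" "E \<subseteq> \<Union>F" unfolding covers_def by blast
    have I: "E \<inter> E0 \<in> C" using E E0 filt_int[OF filt] by blast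
    then have "E \<inter> E0 \<noteq> {}" using ne filt_sub[OF filt I] by blast
    then obtain y where y: "y \<in> E" "y \<in> E0" by blast
    then obtain G where "G \<in> F" "y \<in> G" using E by blast
    then show False using E0 y by blast
  qed
qed

lemma abstract_main:
  assumes ne: "\<forall>E\<in>D. E \<noteq> {}" and cl: "\<forall>E\<in>D. \<forall>F\<in>D. E \<inter> F \<noteq> {} \<longrightarrow> E \<inter> F \<in> D"
    and Dne: "D \<noteq> {}"
    and S: "S = {C. is_filter_in D C \<and> (\<forall>F. finite F \<and> F \<subseteq> D \<and> F \<inter> C = {} \<longrightarrow> \<not> covers F C)}"
  shows "(\<forall>C. is_maximal_filter_in D C \<longrightarrow> C \<in> S)
    \<and> (\<forall>X. X \<subseteq> S \<and> (\<forall>A\<in>X. \<forall>B\<in>X. A \<subseteq> B \<or> B \<subseteq> A) \<longrightarrow>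
           (\<exists>U\<in>S. \<forall>A\<in>X. A \<subseteq> U))
    \<and> (\<forall>C. C \<in> S \<and> (\<forall>C'\<in>S. C \<subseteq> C' \<longrightarrow> C' = C) \<longrightarrow> is_maximal_filter_in D C)"
proof -
  have mem: "C \<in> S \<longleftrightarrow> is_filter_in D C \<and> (\<forall>F. finite F \<and> F \<subseteq> D \<and> F \<inter> C = {} \<longrightarrow> \<not> covers F C)" for C
    using S by simp
  have A: "C \<in> S" if "is_maximal_filter_in D C" for C
  proof -
    have "is_filter_in D C" using that by (simp add: is_maximal_filter_in_def)
    then show ?thesis using part_a[OF ne cl that] mem by simp
  qed
  have B: "\<exists>U\<in>S. \<forall>A\<in>X. A \<subseteq> U" if X: "X \<subseteq> S" "\<forall>A\<in>X. \<forall>B\<in>X. A \<subseteq> B \<or> B \<subseteq> A" for X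
  proof (cases "X = {}")
    case True
    from Dne obtain E where E: "E \<in> D" by blast
    have "is_filter_in D {F\<in>D. E \<subseteq> F}"
      unfolding is_filter_in_def
    proof (intro conjI ballI impI)
      show "{F \<in> D. E \<subseteq> F} \<noteq> {}" using E by blast
      show "{F \<in> D. E \<subseteq> F} \<subseteq> D" by blast
    next
      fix F1 F2 assume F: "F1 \<in> {F \<in> D. E \<subseteq> F}" "F2 \<in> {F \<in> D. E \<subseteq> F}"
      have "E \<noteq> {}" using ne E by blast
      then have "F1 \<inter> F2 \<noteq> {}" using F by blast
      then have "F1 \<inter> F2 \<in> D" using cl F by blast
      then show "F1 \<inter> F2 \<in> {F \<in> D. E \<subseteq> F}" using F by blast
    next
      fix F1 F2 assume "F1 \<in> {F \<in> D. E \<subseteq> F}" "F2 \<in> D" "F1 \<subseteq> F2"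
      then show "F2 \<in> {F \<in> D. E \<subseteq> F}" by blast
    qed
    from filter_max[OF this] obtain M where "is_maximal_filter_in D M" by blast
    then show ?thesis using A True by blast
  next
    case False
    have XF: "\<forall>A\<in>X. is_filter_in D A" using X mem by auto
    have U: "is_filter_in D (\<Union>X)" by (rule union_filter[OF False XF X(2)])
    have "\<not> covers F (\<Union>X)" if Fh: "finite F \<and> F \<subseteq> D \<and> F \<inter> \<Union>X = {}" for F
    proof
      assume "covers F (\<Union>X)"
      then obtain E A where EA: "A \<in> X" "E \<in> A" "E \<subseteq> \<Union>F" unfolding covers_def by blast
      have "F \<inter> A = {}" using Fh EA(1) by blast
      moreover have "covers F A" using EA unfolding covers_def by blast
      moreover have "A \<in> S" using X EA by blast
      then have "\<forall>F. finite F \<and> F \<subseteq> D \<and> F \<inter> A = {} \<longrightarrow> \<not> covers F A" using mem by simp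
      ultimately show False using Fh by simp
    qed
    then have "\<Union>X \<in> S" using U mem by simp
    then show ?thesis by blast
  qed
  have C: "is_maximal_filter_in D C" if C: "C \<in> S" "\<forall>C'\<in>S. C \<subseteq> C' \<longrightarrow> C' = C" for C
    unfolding is_maximal_filter_in_def
  proof (intro conjI allI impI)
    show "is_filter_in D C" using C mem by simp
    fix C' assume C': "is_filter_in D C' \<and> C \<subseteq> C'"
    from filter_max[of D C'] C' obtain M where M: "is_maximal_filter_in D M" "C' \<subseteq> M" by blast
    have "M \<in> S" by (rule A[OF M(1)])
    moreover have "C \<subseteq> M" using C' M by blast
    ultimately have "M = C" using C(2) by blast
    then show "C' = C" using M C' by blast
  qed
  show ?thesis
  proof (intro conjI allI impI)
    fix C assume "is_maximal_filter_in D C" then show "C \<in> S" by (rule A)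
  next
    fix X assume h: "X \<subseteq> S \<and> (\<forall>A\<in>X. \<forall>B\<in>X. A \<subseteq> B \<or> B \<subseteq> A)"
    show "\<exists>U\<in>S. \<forall>A\<in>X. A \<subseteq> U" by (rule B) (use h in simp_all)
  next
    fix C0 assume h: "C0 \<in> S \<and> (\<forall>C'\<in>S. C0 \<subseteq> C' \<longrightarrow> C' = C0)"
    show "is_maximal_filter_in D C0" by (rule C) (use h in simp_all)
  qed
qed

lemma D0_nonempty:
  assumes L: "lcsc Obj Mor s r idm cmp" and v: "v \<in> Obj"
  shows "D0 Mor s r cmp v \<noteq> {}"
proof -
  let ?i = "idm v"
  have i: "?i \<in> Mor" "s ?i = v" "r ?i = v" using L v unfolding lcsc_def by auto
  have ii: "cmp ?i ?i = ?i" using L i unfolding lcsc_def by metis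
  let ?z = "[(?i, ?i)]"
  have z: "is_zigzag Mor s r ?z" using i by (simp add: is_zigzag_def)
  have src: "zz_src s ?z = v" using i by (simp add: zz_src_def)
  have "zz_map Mor s r cmp ?z ?i = Some ?i"
    using i sigma_cmp[OF L i(1) i(1)] by (simp add: tau_map_def)
  then have "?i \<in> zz_dom Mor s r cmp ?z" using i src by (simp add: zz_dom_def)
  then show ?thesis unfolding D0_def using z src by blast
qed

theorem mainTheorem10:
  fixes Obj :: "'o set" and Mor :: "'a set" and s r :: "'a \<Rightarrow> 'o"
    and idm :: "'o \<Rightarrow> 'a" and cmp :: "'a \<Rightarrow> 'a \<Rightarrow> 'a" and v :: 'o
  assumes "lcsc Obj Mor s r idm cmp" and "v \<in> Obj"
  shows "(\<forall>C. is_maximal_filter_in (D0 Mor s r cmp v) C \<longrightarrow> C \<in> vLambda_star Mor s r cmp v)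
    \<and> (\<forall>X. X \<subseteq> vLambda_star Mor s r cmp v \<and> (\<forall>A\<in>X. \<forall>B\<in>X. A \<subseteq> B \<or> B \<subseteq> A) \<longrightarrow>
           (\<exists>U\<in>vLambda_star Mor s r cmp v. \<forall>A\<in>X. A \<subseteq> U))
    \<and> (\<forall>C. C \<in> vLambda_star Mor s r cmp v \<and>
           (\<forall>C'\<in>vLambda_star Mor s r cmp v. C \<subseteq> C' \<longrightarrow> C' = C)
           \<longrightarrow> is_maximal_filter_in (D0 Mor s r cmp v) C)"
proof (rule abstract_main)
  show "\<forall>E\<in>D0 Mor s r cmp v. E \<noteq> {}" unfolding D0_def by blast
  show "\<forall>E\<in>D0 Mor s r cmp v. \<forall>F\<in>D0 Mor s r cmp v. E \<inter> F \<noteq> {} \<longrightarrow> E \<inter> F \<in> D0 Mor s r cmp v"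
    using D0_inter[OF assms(1)] by blast
  show "D0 Mor s r cmp v \<noteq> {}" by (rule D0_nonempty[OF assms])
  show "vLambda_star Mor s r cmp v = {C. is_filter_in (D0 Mor s r cmp v) C \<and>
     (\<forall>F. finite F \<and> F \<subseteq> D0 Mor s r cmp v \<and> F \<inter> C = {} \<longrightarrow> \<not> covers F C)}"
    by (rule vLambda_star_def)
qed

end
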